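(* Let $(M,\rho)$ be a metric space, $f:[a,b]\to M$ arbitrary, and $E=\{x\in[a,b]: md(f,x)\text{ exists and } md(f,x)=0\}$. Then $\mathcal H^1(f(E))=0$.
   Context: $md(f,x)=\lim_{t\to0,\ x+t\in[a,b]}\rho(f(x+t),f(x))/|t|$ when it exists. $\mathcal H^1$ is one-dimensional Hausdorff measure on $M$. *)

theory Defs
  imports "HOL-Analysis.Analysis"
begin

definition has_metric_derivative ::
  "(real \<Rightarrow> 'a::metric_space) \<Rightarrow> real \<Rightarrow> real \<Rightarrow> real \<Rightarrow> real \<Rightarrow> bool" where
  "has_metric_derivative f a b x L \<longleftrightarrow>
     ((\<lambda>t. dist (f (x + t)) (f x) / \<bar>t\<bar>) \<longlongrightarrow> L) (at 0 within {t. x + t \<in> {a..b}})"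

definition hausdorff1_approx :: "real \<Rightarrow> 'a::metric_space set \<Rightarrow> ennreal" where
  "hausdorff1_approx \<delta> A =
     (INF C \<in> {C :: nat \<Rightarrow> 'a set. A \<subseteq> (\<Union>i. C i) \<and>
                  (\<forall>i. bounded (C i) \<and> diameter (C i) \<le> \<delta>)}.
        (\<Sum>i. ennreal (diameter (C i))))"

definition hausdorff1 :: "'a::metric_space set \<Rightarrow> ennreal" where
  "hausdorff1 A = (SUP \<delta> \<in> {0<..}. hausdorff1_approx \<delta> A)"

end

theory Submission
  imports Defs "HOL-Library.Nat_Bijection"
begin

lemma md_zero_local:
  fixes f :: "real \<Rightarrow> 'a::metric_space"
  assumes "has_metric_derivative f a b x 0" "e > 0"
  shows "\<exists>r>0. \<forall>y\<in>{a..b}. \<bar>y - x\<bar> \<le> r \<longrightarrow> dist (f y) (f x) \<le> e * \<bar>y - x\<bar>"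
proof -
  from assms(1) have "\<forall>\<^sub>F t in at 0 within {t. x + t \<in> {a..b}}. dist (dist (f (x + t)) (f x) / \<bar>t\<bar>) 0 < e"
    unfolding has_metric_derivative_def using assms(2) tendstoD by blast
  then obtain d where d: "d > 0" and dd: "\<And>t. t \<in> {t. x + t \<in> {a..b}} \<Longrightarrow> t \<noteq> 0 \<Longrightarrow> dist t 0 < d \<Longrightarrow>
      dist (dist (f (x + t)) (f x) / \<bar>t\<bar>) 0 < e"
    unfolding eventually_at by blast
  show ?thesis
  proof (intro exI[of _ "d/2"] conjI ballI impI)
    show "0 < d/2" using d by simp
    fix y assume y: "y \<in> {a..b}" "\<bar>y - x\<bar> \<le> d/2"
    show "dist (f y) (f x) \<le> e * \<bar>y - x\<bar>"
    proof (cases "y = x")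
      case True then show ?thesis by simp
    next
      case False
      have "dist (dist (f (x + (y - x))) (f x) / \<bar>y - x\<bar>) 0 < e"
        using dd[of "y - x"] y d False by simp
      then have "dist (f y) (f x) / \<bar>y - x\<bar> < e" by simp
      then show ?thesis using False by (simp add: divide_less_eq mult.commute less_imp_le)
    qed
  qed
qed

lemma floor_pow2:
  fixes x :: real
  assumes "k' \<le> k"
  shows "\<lfloor>x * 2^k\<rfloor> div 2^(k-k') = \<lfloor>x * 2^k'\<rfloor>"
proof -
  have e: "(2::real)^k = 2^k' * 2^(k-k')" using assms by (simp flip: power_add)
  have "x * 2^k' = x * 2^k / real_of_int (2^(k-k'))" by (simp add: e)
  then show ?thesis using floor_divide_real_eq_div[of "2^(k-k')" "x * 2^k"] by simp
qed

lemma diameter_cball_le: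
  fixes S :: "'a::metric_space set"
  assumes "S \<subseteq> cball c r" "0 \<le> r"
  shows "diameter S \<le> 2 * r"
proof (cases "S = {}")
  case True then show ?thesis using assms by simp
next
  case False
  have "dist x y \<le> 2 * r" if "x \<in> S" "y \<in> S" for x y
  proof -
    have "dist x y \<le> dist c x + dist c y" by (simp add: dist_triangle3 dist_commute)
    also have "\<dots> \<le> 2 * r" using assms(1) that by (smt (verit) mem_cball subsetD)
    finally show ?thesis .
  qed
  then show ?thesis using False unfolding diameter_def by (auto intro!: cSUP_least)
qed

lemma main_bound:
  fixes f :: "real \<Rightarrow> 'a::metric_space"
  assumes Esub: "E \<subseteq> {a..b}"
    and loc: "\<And>x e. x \<in> E \<Longrightarrow> e > 0 \<Longrightarrow> \<exists>r>0. \<forall>y\<in>{a..b}. \<bar>y - x\<bar> \<le> r \<longrightarrow> dist (f y) (f x) \<le> e * \<bar>y - x\<bar>"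
    and dpos: "\<delta> > 0" and epos: "0 < \<epsilon>" and ehalf: "\<epsilon> \<le> 1/2"
  shows "hausdorff1_approx \<delta> (f ` E) \<le> ennreal (2*\<epsilon>) * emeasure lborel {a-1..b+1}"
proof -
  obtain k0 where k0: "(1/2::real)^k0 < \<delta>" using real_arch_pow_inv[OF dpos, of "1/2"] by auto
  define J where "J k j = {real_of_int j / 2^k ..< (real_of_int j + 1) / 2^k}" for k :: nat and j :: int
  have memJ: "x \<in> J k j \<longleftrightarrow> \<lfloor>x * 2^k\<rfloor> = j" for x k j
    unfolding J_def floor_eq_iff by (simp add: divide_le_eq less_divide_eq)
  define good where "good k j \<longleftrightarrow> k0 \<le> k \<and> (\<exists>x\<in>E. \<lfloor>x * 2^k\<rfloor> = j \<and>
      (\<forall>y\<in>{a..b}. \<bar>y - x\<bar> \<le> 1/2^k \<longrightarrow> dist (f y) (f x) \<le> \<epsilon> * \<bar>y - x\<bar>))" for k :: nat and j :: int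
  define mg where "mg k j \<longleftrightarrow> good k j \<and> (\<forall>k'<k. \<not> good k' (j div 2^(k-k')))" for k :: nat and j :: int
  define g where "g i = (fst (prod_decode i), int_decode (snd (prod_decode i)))" for i
  have ginv: "g (prod_encode (k, int_encode j)) = (k, j)" for k j by (simp add: g_def)
  have ginj: "g i = g i' \<Longrightarrow> i = i'" for i i'
  proof -
    assume "g i = g i'"
    then have "prod_encode (fst (g i), int_encode (snd (g i))) = prod_encode (fst (g i'), int_encode (snd (g i')))" by simp
    then show "i = i'" by (simp add: g_def)
  qed
  define C where "C i = (if mg (fst (g i)) (snd (g i)) then f ` (E \<inter> J (fst (g i)) (snd (g i))) else {})" for i
  define D where "D i = (if mg (fst (g i)) (snd (g i)) then J (fst (g i)) (snd (g i)) else {})" for i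
  have lenJ: "\<bar>y - x\<bar> \<le> 1/2^k" if "y \<in> J k j" "x \<in> J k j" for x y k j
    using that unfolding J_def by (auto simp: abs_le_iff diff_divide_distrib[symmetric] add_divide_distrib)
  have cover: "f ` E \<subseteq> (\<Union>i. C i)"
  proof
    fix y assume "y \<in> f ` E"
    then obtain x where x: "x \<in> E" "y = f x" by auto
    obtain r where r: "r > 0" "\<forall>y\<in>{a..b}. \<bar>y - x\<bar> \<le> r \<longrightarrow> dist (f y) (f x) \<le> \<epsilon> * \<bar>y - x\<bar>"
      using loc[OF x(1) epos] by blast
    obtain n where n: "(1/2::real)^n < r" using real_arch_pow_inv[OF r(1), of "1/2"] by auto
    define k where "k = max n k0"
    have "(1/2::real)^k \<le> (1/2)^n" unfolding k_def by (rule power_decreasing) auto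
    then have "1/2^k \<le> r" using n by (simp add: power_one_over)
    then have gk: "good k \<lfloor>x * 2^k\<rfloor>" unfolding good_def k_def using x r by force
    define m where "m = (LEAST k. good k \<lfloor>x * 2^k\<rfloor>)"
    have gm: "good m \<lfloor>x * 2^m\<rfloor>" unfolding m_def by (rule LeastI[where P="\<lambda>k. good k \<lfloor>x * 2^k\<rfloor>", OF gk])
    have "mg m \<lfloor>x * 2^m\<rfloor>"
      unfolding mg_def
    proof (intro conjI gm allI impI)
      fix k' assume "k' < m"
      then have "\<not> good k' \<lfloor>x * 2^k'\<rfloor>" unfolding m_def by (rule not_less_Least)
      then show "\<not> good k' (\<lfloor>x * 2^m\<rfloor> div 2^(m-k'))" using floor_pow2[of k' m x] \<open>k' < m\<close> by simp
    qed
    then have "y \<in> C (prod_encode (m, int_encode \<lfloor>x * 2^m\<rfloor>))"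
      unfolding C_def ginv using x memJ by auto
    then show "y \<in> (\<Union>i. C i)" by blast
  qed
  have diamC: "bounded (C i) \<and> diameter (C i) \<le> 2 * \<epsilon> / 2^(fst (g i))" for i
  proof (cases "mg (fst (g i)) (snd (g i))")
    case False then show ?thesis using epos by (simp add: C_def)
  next
    case True
    define k where "k = fst (g i)"
    define j where "j = snd (g i)"
    from True obtain x where x: "x \<in> E" "\<lfloor>x * 2^k\<rfloor> = j"
      "\<forall>y\<in>{a..b}. \<bar>y - x\<bar> \<le> 1/2^k \<longrightarrow> dist (f y) (f x) \<le> \<epsilon> * \<bar>y - x\<bar>"
      unfolding mg_def good_def k_def j_def by blast
    have sub: "C i \<subseteq> cball (f x) (\<epsilon> / 2^k)"
    proof
      fix z assume "z \<in> C i"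
      then obtain y where y: "y \<in> E" "y \<in> J k j" "z = f y" using True unfolding C_def k_def j_def by auto
      have l: "\<bar>y - x\<bar> \<le> 1/2^k" using lenJ[OF y(2)] x(2) memJ by blast
      have "dist (f y) (f x) \<le> \<epsilon> * \<bar>y - x\<bar>" using x(3) y(1) Esub l by blast
      also have "\<dots> \<le> \<epsilon> * (1/2^k)" using l epos by (intro mult_left_mono) auto
      finally show "z \<in> cball (f x) (\<epsilon> / 2^k)" using y by (simp add: dist_commute)
    qed
    have "diameter (C i) \<le> 2 * (\<epsilon> / 2^k)" by (rule diameter_cball_le[OF sub]) (use epos in simp)
    then show ?thesis using sub bounded_cball bounded_subset k_def by auto
  qed
  have Cdelta: "bounded (C i) \<and> diameter (C i) \<le> \<delta>" for i
  proof -
    have "(1/2::real)^(fst (g i)) \<le> (1/2)^k0 \<or> C i = {}"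
      unfolding C_def mg_def good_def by (auto intro: power_decreasing)
    then have "2 * \<epsilon> / 2^(fst (g i)) \<le> \<delta> \<or> C i = {}"
    proof
      assume h: "(1/2::real)^(fst (g i)) \<le> (1/2)^k0"
      have "2 * \<epsilon> / 2^(fst (g i)) = (2*\<epsilon>) * (1/2)^(fst (g i))" by (simp add: power_one_over)
      also have "\<dots> \<le> 1 * (1/2)^(fst (g i))" using ehalf by (intro mult_right_mono) auto
      also have "\<dots> < \<delta>" using order_le_less_trans[OF h k0] by simp
      finally show ?thesis by simp
    qed simp
    then show ?thesis using diamC[of i] dpos by auto
  qed
  have nolow: "k' \<ge> k" if "mg k \<lfloor>z * 2^k\<rfloor>" "good k' \<lfloor>z * 2^k'\<rfloor>" for z :: real and k k'
  proof (rule ccontr)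
    assume "\<not> k' \<ge> k"
    then have "k' < k" by simp
    then show False using that floor_pow2[of k' k z] unfolding mg_def by auto
  qed
  have disj: "disjoint_family D"
    unfolding disjoint_family_on_def
  proof (intro ballI impI)
    fix i i' :: nat assume "i \<noteq> i'"
    then have ne: "g i \<noteq> g i'" using ginj by blast
    show "D i \<inter> D i' = {}"
    proof (rule ccontr)
      assume "D i \<inter> D i' \<noteq> {}"
      then obtain z where z: "z \<in> D i" "z \<in> D i'" by blast
      then have m1: "mg (fst (g i)) \<lfloor>z * 2^(fst (g i))\<rfloor>" and m2: "mg (fst (g i')) \<lfloor>z * 2^(fst (g i'))\<rfloor>"
        and e1: "snd (g i) = \<lfloor>z * 2^(fst (g i))\<rfloor>" and e2: "snd (g i') = \<lfloor>z * 2^(fst (g i'))\<rfloor>"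
        unfolding D_def by (auto split: if_splits simp: memJ)
      have "fst (g i) = fst (g i')"
        using nolow[OF m1, of "fst (g i')"] nolow[OF m2, of "fst (g i)"] m1 m2 unfolding mg_def by auto
      then have "g i = g i'" using e1 e2 by (simp add: prod_eq_iff)
      then show False using ne by simp
    qed
  qed
  have Dsub: "D i \<subseteq> {a-1..b+1}" for i
  proof (cases "mg (fst (g i)) (snd (g i))")
    case False then show ?thesis by (simp add: D_def)
  next
    case True
    define k where "k = fst (g i)"
    define j where "j = snd (g i)"
    from True obtain x where x: "x \<in> E" "\<lfloor>x * 2^k\<rfloor> = j"
      unfolding mg_def good_def k_def j_def by blast
    have xJ: "x \<in> J k j" using x memJ by blast
    have p: "1/2^k \<le> (1::real)" by simp
    show ?thesis
    proof
      fix y assume "y \<in> D i"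
      then have "y \<in> J k j" using True unfolding D_def k_def j_def by simp
      then have "\<bar>y - x\<bar> \<le> 1" using lenJ[OF _ xJ] p by (meson order_trans)
      moreover have "x \<in> {a..b}" using x(1) Esub by blast
      ultimately show "y \<in> {a-1..b+1}" by (auto simp: abs_le_iff)
    qed
  qed
  have Dmeas: "emeasure lborel (D i) = ennreal (if mg (fst (g i)) (snd (g i)) then 1/2^(fst (g i)) else 0)" for i
    by (simp add: D_def J_def diff_divide_distrib[symmetric] divide_right_mono)
  have termb: "ennreal (diameter (C i)) \<le> ennreal (2*\<epsilon>) * emeasure lborel (D i)" for i
  proof (cases "mg (fst (g i)) (snd (g i))")
    case False then show ?thesis by (simp add: C_def)
  next
    case True
    have "ennreal (diameter (C i)) \<le> ennreal (2 * \<epsilon> * (1/2^(fst (g i))))"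
      using diamC[of i] by (intro ennreal_leI) simp
    also have "\<dots> = ennreal (2*\<epsilon>) * ennreal (1/2^(fst (g i)))"
      by (rule ennreal_mult) (use epos in auto)
    finally show ?thesis using True Dmeas[of i] by simp
  qed
  have "hausdorff1_approx \<delta> (f ` E) \<le> (\<Sum>i. ennreal (diameter (C i)))"
    unfolding hausdorff1_approx_def using cover Cdelta by (intro INF_lower) auto
  also have "\<dots> \<le> (\<Sum>i. ennreal (2*\<epsilon>) * emeasure lborel (D i))"
    by (intro suminf_le termb) auto
  also have "\<dots> = ennreal (2*\<epsilon>) * emeasure lborel (\<Union>i. D i)"
  proof -
    have "range D \<subseteq> sets lborel" unfolding D_def J_def by auto
    then show ?thesis using suminf_emeasure[OF _ disj] by simp
  qed
  also have "\<dots> \<le> ennreal (2*\<epsilon>) * emeasure lborel {a-1..b+1}"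
    using Dsub by (intro mult_left_mono emeasure_mono) auto
  finally show ?thesis .
qed

theorem theorem3p13:
  fixes f :: "real \<Rightarrow> 'a::metric_space" and a b :: real
  defines "E \<equiv> {x \<in> {a..b}. has_metric_derivative f a b x 0}"
  shows "hausdorff1 (f ` E) = 0"
proof -
  have Esub: "E \<subseteq> {a..b}" unfolding E_def by auto
  have loc: "\<And>x e. x \<in> E \<Longrightarrow> e > 0 \<Longrightarrow> \<exists>r>0. \<forall>y\<in>{a..b}. \<bar>y - x\<bar> \<le> r \<longrightarrow> dist (f y) (f x) \<le> e * \<bar>y - x\<bar>"
    unfolding E_def using md_zero_local by blast
  define c where "c = (if a - 1 \<le> b + 1 then b + 1 - (a - 1) else 0)"
  have c0: "c \<ge> 0" unfolding c_def by auto
  have L: "emeasure lborel {a-1..b+1} = ennreal c" unfolding c_def by (simp add: emeasure_lborel_Icc_eq)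
  have "hausdorff1_approx \<delta> (f ` E) \<le> 0" if dpos: "\<delta> > 0" for \<delta>
  proof (rule ennreal_le_epsilon)
    fix e :: real assume e: "0 < e"
    define \<epsilon> where "\<epsilon> = min (1/2) (e / (2 * (c + 1)))"
    have ep1: "0 < \<epsilon>" unfolding \<epsilon>_def using e c0 by auto
    have ep2: "\<epsilon> \<le> 1/2" unfolding \<epsilon>_def by (rule min.cobounded1)
    note ep = ep1 ep2
    have "2 * \<epsilon> * c \<le> e"
    proof -
      have "\<epsilon> \<le> e / (2 * (c + 1))" unfolding \<epsilon>_def by simp
      then have "2 * \<epsilon> * (c + 1) \<le> e" using c0 by (simp add: field_simps)
      moreover have "2 * \<epsilon> * c \<le> 2 * \<epsilon> * (c + 1)" using ep1 by simp
      ultimately show ?thesis by linarith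
    qed
    have "hausdorff1_approx \<delta> (f ` E) \<le> ennreal (2*\<epsilon>) * ennreal c"
      using main_bound[OF Esub loc dpos ep] L by simp
    also have "\<dots> = ennreal (2 * \<epsilon> * c)" using ep c0 by (simp add: ennreal_mult)
    also have "\<dots> \<le> ennreal e" by (rule ennreal_leI) fact
    finally show "hausdorff1_approx \<delta> (f ` E) \<le> 0 + ennreal e" by simp
  qed
  then have "hausdorff1 (f ` E) \<le> 0" unfolding hausdorff1_def by (intro SUP_least) auto
  then show ?thesis by simp
qed

end
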